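(* Let $G(T)$ be the graph inverse semigroup of the unary tree $T$, endowed with a Hausdorff topology $\tau$ making it a topological semigroup. Then $(G(T),\tau)$ embeds (as a subsemigroup and topological subspace) densely into a CLP-compact topological semigroup $S$ if and only if $(G(T),\tau)$ is compact, i.e., $\tau=\tau_c$.
   Context: All spaces are Hausdorff; CLP-compact means every cover by clopen sets has a finite subcover. The unary tree $T$ has vertex set $\omega$ and edges $(n,n+1)$ with source $n$ and range $n+1$. The graph inverse semigroup $G(T)$ is the semigroup with zero $0$ generated by the vertices, the edges and formal inverses $e^{-1}$ of edges subject to: for vertices $a,b$: $ab=a$ if $a=b$, else $0$; for edges $e,f$: $s(e)e=er(e)=e$, $e^{-1}s(e)=r(e)e^{-1}=e^{-1}$, $e^{-1}f=r(e)$ if $e=f$, else $0$. The topology $\tau_c$ on $G(T)$: non-zero elements are isolated and the open neighborhoods of $0$ are the cofinite subsets containing $0$. *)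

theory Defs
  imports "HOL-Analysis.Analysis"
begin

text \<open>Graph inverse semigroup G(T) of the unary tree T (vertices \<omega>, edges (n,n+1)).
  Every path of T is determined by its source n and range m with n \<le> m.
  Every non-zero element of G(T) has the unique normal form u v^-1 with u, v paths
  and r(u) = r(v); we write GEl i j k for u v^-1 where u is the path from i to k and
  v the path from j to k (so i \<le> k, j \<le> k).  The vertex n is GEl n n n, the edge
  (n,n+1) is GEl n (n+1) (n+1) and its inverse is GEl (n+1) n (n+1).\<close>

datatype gt = GZero | GEl nat nat nat

definition GT :: "gt set" where
  "GT = insert GZero {GEl i j k | i j k. i \<le> k \<and> j \<le> k}"

text \<open>Multiplication: (u v^-1)(w z^-1) is non-zero iff one of v, w is a prefix of the
  other; in the unary tree this happens iff s(v) = s(w).\<close>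
fun gt_mult :: "gt \<Rightarrow> gt \<Rightarrow> gt" where
  "gt_mult (GEl i j k) (GEl j' l k') = (if j = j' then GEl i l (max k k') else GZero)"
| "gt_mult _ _ = GZero"

definition tau_c :: "gt topology" where
  "tau_c = topology (\<lambda>U. U \<subseteq> GT \<and> (GZero \<in> U \<longrightarrow> finite (GT - U)))"

definition is_semitop_topology :: "gt topology \<Rightarrow> bool" where
  "is_semitop_topology \<tau> \<longleftrightarrow> topspace \<tau> = GT \<and> Hausdorff_space \<tau> \<and>
     continuous_map (prod_topology \<tau> \<tau>) \<tau> (\<lambda>(x, y). gt_mult x y)"

definition CLP_compact :: "'a topology \<Rightarrow> bool" where
  "CLP_compact X \<longleftrightarrow> (\<forall>\<U>. (\<forall>U\<in>\<U>. closedin X U \<and> openin X U) \<and> topspace X \<subseteq> \<Union>\<U>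
       \<longrightarrow> (\<exists>\<F>. finite \<F> \<and> \<F> \<subseteq> \<U> \<and> topspace X \<subseteq> \<Union>\<F>))"

definition top_semigroup :: "'a topology \<Rightarrow> ('a \<Rightarrow> 'a \<Rightarrow> 'a) \<Rightarrow> bool" where
  "top_semigroup X m \<longleftrightarrow> Hausdorff_space X \<and>
     (\<forall>x\<in>topspace X. \<forall>y\<in>topspace X. m x y \<in> topspace X) \<and>
     (\<forall>x\<in>topspace X. \<forall>y\<in>topspace X. \<forall>z\<in>topspace X. m (m x y) z = m x (m y z)) \<and>
     continuous_map (prod_topology X X) X (\<lambda>(x, y). m x y)"

definition dense_embeds :: "gt topology \<Rightarrow> 'a topology \<Rightarrow> ('a \<Rightarrow> 'a \<Rightarrow> 'a) \<Rightarrow> bool" where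
  "dense_embeds \<tau> X m \<longleftrightarrow> (\<exists>f. embedding_map \<tau> X f \<and>
     (\<forall>x\<in>GT. \<forall>y\<in>GT. f (gt_mult x y) = m (f x) (f y)) \<and>
     X closure_of (f ` GT) = topspace X)"

end

theory Submission
  imports Defs
begin

instance gt :: countable by countable_datatype

lemma gt_mult_assoc: "gt_mult (gt_mult x y) z = gt_mult x (gt_mult y z)"
  by (cases x; cases y; cases z) (auto simp: max.assoc)

lemma GEl_in_GT[simp]: "GEl i j k \<in> GT \<longleftrightarrow> i \<le> k \<and> j \<le> k"
  unfolding GT_def by auto

lemma GZero_in_GT[simp]: "GZero \<in> GT"
  unfolding GT_def by auto

lemma gt_mult_GT: "x \<in> GT \<Longrightarrow> y \<in> GT \<Longrightarrow> gt_mult x y \<in> GT"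
  by (cases x; cases y) auto

lemma gt_mult_zero[simp]: "gt_mult x GZero = GZero" "gt_mult GZero x = GZero"
  by (cases x; simp)+

fun kk :: "gt \<Rightarrow> nat" where "kk (GEl i j k) = k" | "kk GZero = 0"
fun ii :: "gt \<Rightarrow> nat" where "ii (GEl i j k) = i" | "ii GZero = 0"
fun jj :: "gt \<Rightarrow> nat" where "jj (GEl i j k) = j" | "jj GZero = 0"

lemma finite_GT_le: "finite {d \<in> GT. kk d \<le> K}"
proof -
  have "{d \<in> GT. kk d \<le> K} \<subseteq> insert GZero ((\<lambda>(i,j,k). GEl i j k) ` ({..K} \<times> {..K} \<times> {..K}))"
  proof
    fix d assume d: "d \<in> {d \<in> GT. kk d \<le> K}"
    show "d \<in> insert GZero ((\<lambda>(i,j,k). GEl i j k) ` ({..K} \<times> {..K} \<times> {..K}))"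
    proof (cases d)
      case (GEl i j k)
      then have "(i,j,k) \<in> {..K} \<times> {..K} \<times> {..K}" using d by auto
      then show ?thesis using GEl by (auto simp: image_iff)
    qed simp
  qed
  then show ?thesis by (rule finite_subset) auto
qed

lemma cm_left:
  assumes "continuous_map (prod_topology X X) X (\<lambda>(x,y). g x y)" "a \<in> topspace X"
  shows "continuous_map X X (\<lambda>y. g a y)"
proof -
  have "continuous_map X (prod_topology X X) (\<lambda>y. (a, y))"
    by (intro continuous_map_pairedI) (auto simp: assms)
  from continuous_map_compose[OF this assms(1)] show ?thesis by (simp add: o_def)
qed

lemma cm_right:
  assumes "continuous_map (prod_topology X X) X (\<lambda>(x,y). g x y)" "a \<in> topspace X"
  shows "continuous_map X X (\<lambda>y. g y a)"
proof -
  have "continuous_map X (prod_topology X X) (\<lambda>y. (y, a))"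
    by (intro continuous_map_pairedI) (auto simp: assms)
  from continuous_map_compose[OF this assms(1)] show ?thesis by (simp add: o_def)
qed

lemma cm_sq:
  assumes "continuous_map (prod_topology X X) X (\<lambda>(x,y). g x y)"
  shows "continuous_map X X (\<lambda>y. g y y)"
proof -
  have "continuous_map X (prod_topology X X) (\<lambda>y. (y, y))"
    by (intro continuous_map_pairedI) auto
  from continuous_map_compose[OF this assms(1)] show ?thesis by (simp add: o_def)
qed

lemma cm_flip:
  assumes "continuous_map (prod_topology X X) X (\<lambda>(x,y). g x y)"
  shows "continuous_map (prod_topology X X) X (\<lambda>(x,y). g y x)"
proof -
  have "continuous_map (prod_topology X X) (prod_topology X X) (\<lambda>p. (snd p, fst p))"
    by (intro continuous_map_pairedI continuous_map_fst continuous_map_snd)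
  from continuous_map_compose[OF this assms(1)] show ?thesis
    by (simp add: o_def case_prod_beta')
qed

lemma tau_isolated:
  assumes st: "is_semitop_topology \<tau>" and x: "x \<in> GT" "x \<noteq> GZero"
  shows "openin \<tau> {x}"
proof -
  from st have tsp: "topspace \<tau> = GT" and Ht: "Hausdorff_space \<tau>"
    and ct: "continuous_map (prod_topology \<tau> \<tau>) \<tau> (\<lambda>(x, y). gt_mult x y)"
    by (auto simp: is_semitop_topology_def)
  obtain i j k where xe: "x = GEl i j k" and ik: "i \<le> k" "j \<le> k" using x by (cases x) auto
  define \<phi> where "\<phi> y = gt_mult (gt_mult (GEl i i k) y) (GEl j j k)" for y
  define \<psi> where "\<psi> y = gt_mult (GEl i i (Suc k)) y" for y
  have c1: "continuous_map \<tau> \<tau> (\<lambda>y. gt_mult (GEl i i k) y)" using cm_left[OF ct] tsp ik by simp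
  have c2: "continuous_map \<tau> \<tau> (\<lambda>y. gt_mult y (GEl j j k))" using cm_right[OF ct] tsp ik by simp
  have "continuous_map \<tau> \<tau> ((\<lambda>y. gt_mult y (GEl j j k)) \<circ> (\<lambda>y. gt_mult (GEl i i k) y))"
    by (rule continuous_map_compose[OF c1 c2])
  moreover have "\<phi> = (\<lambda>y. gt_mult (gt_mult (GEl i i k) y) (GEl j j k))" by (simp add: fun_eq_iff \<phi>_def)
  ultimately have c\<phi>: "continuous_map \<tau> \<tau> \<phi>" by (simp add: o_def)
  have "\<psi> = (\<lambda>y. gt_mult (GEl i i (Suc k)) y)" by (simp add: fun_eq_iff \<psi>_def)
  then have c\<psi>: "continuous_map \<tau> \<tau> \<psi>" using cm_left[OF ct] tsp ik by simp
  define F where "F = {y \<in> topspace \<tau>. \<psi> y = id y}"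
  have "closedin \<tau> F" unfolding F_def by (rule closedin_continuous_maps_eq[OF Ht c\<psi> continuous_map_id])
  then have oV: "openin \<tau> (topspace \<tau> - F)" by (simp add: openin_diff)
  define W where "W = {y \<in> topspace \<tau>. \<phi> y \<in> topspace \<tau> - F}"
  have oW: "openin \<tau> W" unfolding W_def by (rule openin_continuous_map_preimage[OF c\<phi> oV])
  have xW: "x \<in> W" using x ik by (simp add: W_def F_def \<phi>_def \<psi>_def xe tsp)
  have Wsub: "W \<subseteq> (\<lambda>k'. GEl i j k') ` {..k}"
  proof
    fix y assume y: "y \<in> W"
    show "y \<in> (\<lambda>k'. GEl i j k') ` {..k}"
    proof (cases y)
      case GZero then show ?thesis using y by (simp add: W_def F_def \<phi>_def \<psi>_def tsp)
    next
      case (GEl i' j' k') then show ?thesis using y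
        by (auto simp: W_def F_def \<phi>_def \<psi>_def tsp split: if_splits)
    qed
  qed
  have finW: "finite W" using Wsub finite_subset by blast
  have t1: "t1_space \<tau>" using Ht Hausdorff_imp_t1_space by blast
  have "closedin \<tau> (W - {x})" using t1 finW openin_subset[OF oW]
    unfolding t1_space_closedin_finite by auto
  then have "openin \<tau> (W - (W - {x}))" using oW openin_diff by blast
  moreover have "W - (W - {x}) = {x}" using xW by auto
  ultimately show ?thesis by simp
qed

lemma cluster_exists:
  assumes H: "Hausdorff_space X" and C: "CLP_compact X" and iso: "\<forall>x\<in>A. openin X {x}"
    and N: "infinite N" and a: "\<forall>n\<in>N. a n \<in> A"
  shows "\<exists>\<alpha>\<in>topspace X. \<forall>P. openin X P \<and> \<alpha> \<in> P \<longrightarrow> infinite {n\<in>N. a n \<in> P}"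
proof (rule ccontr)
  assume "\<not> ?thesis"
  then have no: "\<forall>\<alpha>\<in>topspace X. \<exists>P. openin X P \<and> \<alpha> \<in> P \<and> finite {n\<in>N. a n \<in> P}" by blast
  have t1: "t1_space X" using H Hausdorff_imp_t1_space by blast
  have Atop: "A \<subseteq> topspace X" using iso openin_subset by fastforce
  define B where "B = a ` N"
  have BA: "B \<subseteq> A" using a B_def by auto
  have Binf: "infinite B"
  proof
    assume fin: "finite B"
    obtain n0 where n0: "n0 \<in> N" "infinite {n\<in>N. a n = a n0}"
      using pigeonhole_infinite[OF N fin[unfolded B_def]] by blast
    obtain P where P: "openin X P" "a n0 \<in> P" "finite {n\<in>N. a n \<in> P}"
      using no Atop a n0(1) by blast
    have "{n\<in>N. a n = a n0} \<subseteq> {n\<in>N. a n \<in> P}" using P(2) by auto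
    then show False using n0(2) P(3) finite_subset by blast
  qed
  define Cc where "Cc = topspace X - B"
  have Bopen: "openin X B"
  proof -
    have "B = \<Union>((\<lambda>x. {x}) ` B)" by auto
    moreover have "\<forall>S\<in>(\<lambda>x. {x}) ` B. openin X S" using iso BA by auto
    ultimately show ?thesis by (metis openin_Union)
  qed
  have Cclosed: "closedin X Cc" unfolding Cc_def using Bopen by (simp add: closedin_diff)
  have Copen: "openin X Cc"
  proof (subst openin_subopen, intro ballI)
    fix x assume x: "x \<in> Cc"
    then obtain P where P: "openin X P" "x \<in> P" "finite {n\<in>N. a n \<in> P}" using no Cc_def by auto
    have "P \<inter> B = a ` {n\<in>N. a n \<in> P}" by (auto simp: B_def)
    then have fin: "finite (P \<inter> B)" using P(3) by simp
    have "closedin X (P \<inter> B)" using t1 fin openin_subset[OF P(1)]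
      unfolding t1_space_closedin_finite by auto
    then have "openin X (P - (P \<inter> B))" using P(1) openin_diff by blast
    moreover have "x \<in> P - (P \<inter> B)" "P - (P \<inter> B) \<subseteq> Cc"
      using x P Cc_def openin_subset[OF P(1)] by auto
    ultimately show "\<exists>T. openin X T \<and> x \<in> T \<and> T \<subseteq> Cc" by blast
  qed
  define U where "U = insert Cc ((\<lambda>x. {x}) ` B)"
  have "\<forall>V\<in>U. closedin X V \<and> openin X V"
  proof
    fix V assume "V \<in> U"
    then have "V = Cc \<or> (\<exists>b\<in>B. V = {b})" unfolding U_def by blast
    then show "closedin X V \<and> openin X V"
    proof
      assume "V = Cc" then show ?thesis using Cclosed Copen by simp
    next
      assume "\<exists>b\<in>B. V = {b}"
      then obtain b where b: "b \<in> B" "V = {b}" by blast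
      then have "b \<in> topspace X" using BA Atop by blast
      then show ?thesis using b iso BA closedin_t1_singleton[OF t1] by blast
    qed
  qed
  moreover have "topspace X \<subseteq> \<Union>U" by (auto simp: U_def Cc_def)
  moreover have "\<forall>\<U>. (\<forall>U\<in>\<U>. closedin X U \<and> openin X U) \<and> topspace X \<subseteq> \<Union>\<U>
       \<longrightarrow> (\<exists>\<F>. finite \<F> \<and> \<F> \<subseteq> \<U> \<and> topspace X \<subseteq> \<Union>\<F>)"
    using C unfolding CLP_compact_def .
  ultimately have "\<exists>F. finite F \<and> F \<subseteq> U \<and> topspace X \<subseteq> \<Union>F"
    by (meson UnionI)
  then obtain F where F: "finite F" "F \<subseteq> U" "topspace X \<subseteq> \<Union>F" by blast
  have "(\<lambda>x. {x}) ` B \<subseteq> F"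
  proof
    fix S assume "S \<in> (\<lambda>x. {x}) ` B"
    then obtain b where b: "b \<in> B" "S = {b}" by auto
    then have "b \<in> topspace X" using BA Atop by auto
    then obtain T where T: "T \<in> F" "b \<in> T" using F(3) by auto
    then have "T \<in> U" using F(2) by auto
    then have "T = {b}" using T(2) b(1) unfolding U_def Cc_def by auto
    then show "S \<in> F" using T(1) b by simp
  qed
  then have "finite ((\<lambda>x. {x}) ` B)" using F(1) finite_subset by blast
  then have "finite B" by (simp add: finite_image_iff inj_on_def)
  then show False using Binf by simp
qed

lemma coh:
  assumes cont: "continuous_map (prod_topology X X) X (\<lambda>(x,y). g x y)"
    and z: "z \<in> topspace X" and zero: "\<forall>\<alpha>\<in>topspace X. g \<alpha> z = z"
    and clus: "\<forall>N. N \<subseteq> I \<and> infinite N \<longrightarrow> (\<exists>\<alpha>\<in>topspace X. \<forall>P. openin X P \<and> \<alpha> \<in> P \<longrightarrow> infinite {n\<in>N. a n \<in> P})"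
    and conv: "\<forall>W. openin X W \<and> z \<in> W \<longrightarrow> finite {n\<in>I. b n \<notin> W}"
  shows "\<forall>V. openin X V \<and> z \<in> V \<longrightarrow> finite {n\<in>I. g (a n) (b n) \<notin> V}"
proof (intro allI impI, rule ccontr)
  fix V assume V: "openin X V \<and> z \<in> V" and inf: "infinite {n\<in>I. g (a n) (b n) \<notin> V}"
  define N where "N = {n\<in>I. g (a n) (b n) \<notin> V}"
  obtain \<alpha> where \<alpha>: "\<alpha> \<in> topspace X" "\<forall>P. openin X P \<and> \<alpha> \<in> P \<longrightarrow> infinite {n\<in>N. a n \<in> P}"
    using clus[rule_format, of N] inf N_def by auto
  define Q where "Q = {p \<in> topspace (prod_topology X X). (\<lambda>(x,y). g x y) p \<in> V}"
  have oQ: "openin (prod_topology X X) Q" unfolding Q_def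
    using openin_continuous_map_preimage[OF cont] V by blast
  have "(\<alpha>, z) \<in> Q" using \<alpha>(1) z zero V by (simp add: Q_def)
  then obtain P W where PW: "openin X P" "openin X W" "\<alpha> \<in> P" "z \<in> W" "P \<times> W \<subseteq> Q"
    using oQ[unfolded openin_prod_topology_alt, rule_format, OF \<open>(\<alpha>, z) \<in> Q\<close>] by blast
  have i1: "infinite {n\<in>N. a n \<in> P}" using \<alpha>(2)[rule_format, of P] PW by blast
  have f1: "finite {n\<in>I. b n \<notin> W}" using conv[rule_format, of W] PW by blast
  have "infinite ({n\<in>N. a n \<in> P} - {n\<in>I. b n \<notin> W})" by (rule Diff_infinite_finite[OF f1 i1])
  then obtain n where n: "n \<in> {n\<in>N. a n \<in> P} - {n\<in>I. b n \<notin> W}" using infinite_imp_nonempty by blast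
  then have "(a n, b n) \<in> Q" using PW(5) N_def by auto
  then have "g (a n) (b n) \<in> V" by (simp add: Q_def)
  then show False using n N_def by auto
qed

lemma compact_iff_cofinite:
  assumes st: "is_semitop_topology \<tau>"
  shows "compact_space \<tau> \<longleftrightarrow> (\<forall>U. openin \<tau> U \<and> GZero \<in> U \<longrightarrow> finite (GT - U))"
proof
  from st have tsp: "topspace \<tau> = GT" by (auto simp: is_semitop_topology_def)
  assume cpt: "compact_space \<tau>"
  show "\<forall>U. openin \<tau> U \<and> GZero \<in> U \<longrightarrow> finite (GT - U)"
  proof (intro allI impI)
    fix U assume U: "openin \<tau> U \<and> GZero \<in> U"
    have "closedin \<tau> (GT - U)" using U tsp by (metis closedin_diff closedin_topspace)
    then have cp: "compactin \<tau> (GT - U)" using closedin_compact_space cpt by blast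
    have iso: "\<forall>y\<in>GT - U. openin \<tau> {y}" using tau_isolated[OF st] U by auto
    have "\<exists>\<F>. finite \<F> \<and> \<F> \<subseteq> (\<lambda>y. {y}) ` (GT - U) \<and> GT - U \<subseteq> \<Union>\<F>"
      using cp[unfolded compactin_def, THEN conjunct2, rule_format, of "(\<lambda>y. {y}) ` (GT - U)"] iso
      by blast
    then obtain \<F> where F: "finite \<F>" "\<F> \<subseteq> (\<lambda>y. {y}) ` (GT - U)" "GT - U \<subseteq> \<Union>\<F>" by blast
    have "finite (\<Union>\<F>)" using F(1) F(2) by (auto intro!: finite_Union)
    then show "finite (GT - U)" using F(3) finite_subset by blast
  qed
next
  from st have tsp: "topspace \<tau> = GT" by (auto simp: is_semitop_topology_def)
  assume cof: "\<forall>U. openin \<tau> U \<and> GZero \<in> U \<longrightarrow> finite (GT - U)"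
  show "compact_space \<tau>" unfolding compact_space_alt
  proof (intro allI impI)
    fix \<U> assume U: "(\<forall>U\<in>\<U>. openin \<tau> U) \<and> topspace \<tau> \<subseteq> \<Union>\<U>"
    then have "GZero \<in> \<Union>\<U>" using tsp GZero_in_GT by blast
    then obtain U0 where U0: "U0 \<in> \<U>" "GZero \<in> U0" by blast
    have fin: "finite (GT - U0)" using cof U U0 by blast
    have "\<forall>y\<in>GT - U0. \<exists>V\<in>\<U>. y \<in> V" using U tsp by auto
    then obtain c where c: "\<forall>y\<in>GT - U0. c y \<in> \<U> \<and> y \<in> c y" by metis
    show "\<exists>\<F>. finite \<F> \<and> \<F> \<subseteq> \<U> \<and> topspace \<tau> \<subseteq> \<Union>\<F>"
      by (rule exI[of _ "insert U0 (c ` (GT - U0))"]) (use fin c U0 tsp in auto)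
  qed
qed

lemma istop_tau_c: "istopology (\<lambda>U. U \<subseteq> GT \<and> (GZero \<in> U \<longrightarrow> finite (GT - U)))"
  unfolding istopology_def
proof (rule conjI)
  show "\<forall>S T. S \<subseteq> GT \<and> (GZero \<in> S \<longrightarrow> finite (GT - S)) \<longrightarrow> T \<subseteq> GT \<and> (GZero \<in> T \<longrightarrow> finite (GT - T))
     \<longrightarrow> S \<inter> T \<subseteq> GT \<and> (GZero \<in> S \<inter> T \<longrightarrow> finite (GT - S \<inter> T))"
  proof (intro allI impI)
    fix S T assume S: "S \<subseteq> GT \<and> (GZero \<in> S \<longrightarrow> finite (GT - S))"
      and T: "T \<subseteq> GT \<and> (GZero \<in> T \<longrightarrow> finite (GT - T))"
    have "GT - (S \<inter> T) = (GT - S) \<union> (GT - T)" by auto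
    then show "S \<inter> T \<subseteq> GT \<and> (GZero \<in> S \<inter> T \<longrightarrow> finite (GT - S \<inter> T))" using S T by auto
  qed
next
  show "\<forall>K. (\<forall>S\<in>K. S \<subseteq> GT \<and> (GZero \<in> S \<longrightarrow> finite (GT - S))) \<longrightarrow>
     \<Union>K \<subseteq> GT \<and> (GZero \<in> \<Union>K \<longrightarrow> finite (GT - \<Union>K))"
  proof (intro allI impI)
    fix K :: "gt set set" assume K: "\<forall>S\<in>K. S \<subseteq> GT \<and> (GZero \<in> S \<longrightarrow> finite (GT - S))"
    show "\<Union>K \<subseteq> GT \<and> (GZero \<in> \<Union>K \<longrightarrow> finite (GT - \<Union>K))"
    proof (intro conjI impI)
      show "\<Union>K \<subseteq> GT" using K by auto
    next
      assume "GZero \<in> \<Union>K"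
      then obtain S where S: "S \<in> K" "GZero \<in> S" by auto
      then have "finite (GT - S)" using K by auto
      moreover have "GT - \<Union>K \<subseteq> GT - S" using S by auto
      ultimately show "finite (GT - \<Union>K)" using finite_subset by blast
    qed
  qed
qed

lemma openin_tau_c: "openin tau_c U \<longleftrightarrow> U \<subseteq> GT \<and> (GZero \<in> U \<longrightarrow> finite (GT - U))"
  by (simp add: tau_c_def istop_tau_c)

lemma part2:
  assumes st: "is_semitop_topology \<tau>"
  shows "compact_space \<tau> \<longleftrightarrow> \<tau> = tau_c"
proof
  from st have tsp: "topspace \<tau> = GT" and Ht: "Hausdorff_space \<tau>" by (auto simp: is_semitop_topology_def)
  have t1: "t1_space \<tau>" using Ht Hausdorff_imp_t1_space by blast
  assume cpt: "compact_space \<tau>"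
  have cof: "\<forall>U. openin \<tau> U \<and> GZero \<in> U \<longrightarrow> finite (GT - U)"
    using cpt compact_iff_cofinite[OF st] by blast
  show "\<tau> = tau_c" unfolding topology_eq
  proof (intro allI iffI)
    fix S assume S: "openin \<tau> S"
    then show "openin tau_c S" using cof openin_subset[OF S] tsp by (auto simp: openin_tau_c)
  next
    fix S assume "openin tau_c S"
    then have S: "S \<subseteq> GT" "GZero \<in> S \<longrightarrow> finite (GT - S)" by (auto simp: openin_tau_c)
    show "openin \<tau> S"
    proof (cases "GZero \<in> S")
      case True
      then have "finite (GT - S)" using S by blast
      then have "closedin \<tau> (GT - S)" using t1 tsp unfolding t1_space_closedin_finite by auto
      then have "openin \<tau> (topspace \<tau> - (GT - S))" by (simp add: openin_diff)
      moreover have "topspace \<tau> - (GT - S) = S" using S tsp by auto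
      ultimately show ?thesis by simp
    next
      case False
      have "S = \<Union>((\<lambda>y. {y}) ` S)" by auto
      moreover have "\<forall>V\<in>(\<lambda>y. {y}) ` S. openin \<tau> V" using tau_isolated[OF st] S False by auto
      ultimately show ?thesis by (metis openin_Union)
    qed
  qed
next
  assume e: "\<tau> = tau_c"
  have "\<forall>U. openin \<tau> U \<and> GZero \<in> U \<longrightarrow> finite (GT - U)" using e by (simp add: openin_tau_c)
  then show "compact_space \<tau>" using compact_iff_cofinite[OF st] by blast
qed

lemma forward:
  assumes st: "is_semitop_topology \<tau>" and ts: "top_semigroup X m" and clp: "CLP_compact X"
    and de: "dense_embeds \<tau> X m"
  shows "\<forall>U. openin \<tau> U \<and> GZero \<in> U \<longrightarrow> finite (GT - U)"
proof -
  from st have tsp: "topspace \<tau> = GT" unfolding is_semitop_topology_def by blast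
  from ts have HX: "Hausdorff_space X" and mcl: "\<forall>x\<in>topspace X. \<forall>y\<in>topspace X. m x y \<in> topspace X"
    and cX: "continuous_map (prod_topology X X) X (\<lambda>(x,y). m x y)"
    unfolding top_semigroup_def by blast+
  from de obtain f where emb: "embedding_map \<tau> X f"
    and hom: "\<forall>x\<in>GT. \<forall>y\<in>GT. f (gt_mult x y) = m (f x) (f y)"
    and dense: "X closure_of (f ` GT) = topspace X"
    unfolding dense_embeds_def by blast
  have homE: "m (f x) (f y) = f (gt_mult x y)" if "x \<in> GT" "y \<in> GT" for x y
    using hom that by simp
  have t1X: "t1_space X" using HX Hausdorff_imp_t1_space by blast
  have hm: "homeomorphic_map \<tau> (subtopology X (f ` GT)) f" using emb unfolding embedding_map_def tsp .
  have "f ` topspace \<tau> = topspace (subtopology X (f ` GT))" by (rule homeomorphic_imp_surjective_map[OF hm])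
  then have "f ` GT = topspace X \<inter> f ` GT" unfolding tsp topspace_subtopology .
  then have fX: "f ` GT \<subseteq> topspace X" by blast
  have inj: "inj_on f GT" using homeomorphic_imp_injective_map[OF hm] tsp by simp
  have opn: "\<exists>V. openin X V \<and> f ` U = V \<inter> f ` GT" if "openin \<tau> U" for U
  proof -
    have "openin (subtopology X (f`GT)) (f ` U)" using homeomorphic_map_openness_eq[OF hm] that by blast
    then show ?thesis by (auto simp: openin_subtopology)
  qed
  have isoX: "openin X {f g}" if g: "g \<in> GT" "g \<noteq> GZero" for g
  proof -
    obtain V where V: "openin X V" "f ` {g} = V \<inter> f ` GT" using opn[OF tau_isolated[OF st g]] by blast
    have fg: "f g \<in> topspace X" using fX g(1) by blast
    have cs: "X closure_of {f g} = {f g}" using closure_of_singleton[OF t1X, of "f g"] fg by simp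
    have VI: "V \<inter> f ` GT = {f g}" using V(2) by simp
    have "V = V \<inter> topspace X" using openin_subset V(1) by blast
    also have "\<dots> = V \<inter> X closure_of (f ` GT)" using dense by simp
    also have "\<dots> \<subseteq> X closure_of (V \<inter> f ` GT)" by (rule openin_Int_closure_of_subset[OF V(1)])
    also have "\<dots> = {f g}" unfolding VI cs ..
    finally have "V \<subseteq> {f g}" .
    moreover have "f g \<in> V" using VI by blast
    ultimately have "V = {f g}" by auto
    then show "openin X {f g}" using V(1) by simp
  qed
  define z where "z = f GZero"
  have zX: "z \<in> topspace X" using fX z_def by auto
  have fGX: "f x \<in> topspace X" if "x \<in> GT" for x using fX that by auto
  have zero_r: "\<forall>\<alpha>\<in>topspace X. m \<alpha> z = z"
  proof -
    have cl: "closedin X {\<alpha>\<in>topspace X. m \<alpha> z = (\<lambda>_. z) \<alpha>}"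
      by (rule closedin_continuous_maps_eq[OF HX cm_right[OF cX zX]]) (simp add: zX)
    have "f ` GT \<subseteq> {\<alpha>\<in>topspace X. m \<alpha> z = (\<lambda>_. z) \<alpha>}"
    proof
      fix y assume "y \<in> f ` GT"
      then obtain x where x: "x \<in> GT" "y = f x" by auto
      have "m (f x) (f GZero) = f GZero" using hom[rule_format, OF x(1) GZero_in_GT] by simp
      then show "y \<in> {\<alpha>\<in>topspace X. m \<alpha> z = (\<lambda>_. z) \<alpha>}" using x fGX z_def by simp
    qed
    then have "X closure_of (f ` GT) \<subseteq> {\<alpha>\<in>topspace X. m \<alpha> z = (\<lambda>_. z) \<alpha>}"
      using closure_of_minimal cl by blast
    then show ?thesis using dense by auto
  qed
  have zero_l: "\<forall>\<alpha>\<in>topspace X. m z \<alpha> = z"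
  proof -
    have cl: "closedin X {\<alpha>\<in>topspace X. m z \<alpha> = (\<lambda>_. z) \<alpha>}"
      by (rule closedin_continuous_maps_eq[OF HX cm_left[OF cX zX]]) (simp add: zX)
    have "f ` GT \<subseteq> {\<alpha>\<in>topspace X. m z \<alpha> = (\<lambda>_. z) \<alpha>}"
    proof
      fix y assume "y \<in> f ` GT"
      then obtain x where x: "x \<in> GT" "y = f x" by auto
      have "m (f GZero) (f x) = f GZero" using hom[rule_format, OF GZero_in_GT x(1)] by simp
      then show "y \<in> {\<alpha>\<in>topspace X. m z \<alpha> = (\<lambda>_. z) \<alpha>}" using x fGX z_def by simp
    qed
    then have "X closure_of (f ` GT) \<subseteq> {\<alpha>\<in>topspace X. m z \<alpha> = (\<lambda>_. z) \<alpha>}"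
      using closure_of_minimal cl by blast
    then show ?thesis using dense by auto
  qed
  have isoA: "\<forall>x\<in>f ` (GT - {GZero}). openin X {x}" using isoX by auto
  have clus: "\<exists>\<alpha>\<in>topspace X. \<forall>P. openin X P \<and> \<alpha> \<in> P \<longrightarrow> infinite {n\<in>N. a n \<in> P}"
    if "infinite N" "\<forall>n\<in>N. a n \<in> f ` (GT - {GZero})" for N and a :: "'c \<Rightarrow> 'a"
    using cluster_exists[OF HX clp isoA that] .
  define v where "v n = f (GEl n n n)" for n
  have vmul: "m (v l) (v n) = z" if "l \<noteq> n" for l n
    using that by (simp add: v_def z_def homE)
  have vsq: "m (v n) (v n) = v n" for n
    by (simp add: v_def homE)
  have vX: "v n \<in> topspace X" for n using fGX by (simp add: v_def)
  have vA: "v n \<in> f ` (GT - {GZero})" for n by (simp add: v_def)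
  have O: "openin X (topspace X - {z})" by (rule openin_diff[OF openin_topspace closedin_t1_singleton[OF t1X zX]])
  have claimA: "finite {n. v n \<notin> W}" if W: "openin X W" "z \<in> W" for W
  proof (rule ccontr)
    assume inf: "infinite {n. v n \<notin> W}"
    define N where "N = {n. v n \<notin> W}"
    obtain \<nu> where \<nu>: "\<nu> \<in> topspace X" "\<forall>P. openin X P \<and> \<nu> \<in> P \<longrightarrow> infinite {n\<in>N. v n \<in> P}"
      using clus[of N v] inf N_def vA by auto
    have pick: "\<exists>n\<in>N. v n \<in> P \<and> n \<noteq> l" if "openin X P" "\<nu> \<in> P" for P l
    proof -
      have "infinite ({n\<in>N. v n \<in> P} - {l})" using \<nu>(2) that by auto
      then obtain n where "n \<in> {n\<in>N. v n \<in> P} - {l}" using infinite_imp_nonempty by blast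
      then show ?thesis by auto
    qed
    have i: "m (v l) \<nu> = z" for l
    proof (rule ccontr)
      assume ne: "m (v l) \<nu> \<noteq> z"
      define P where "P = {s \<in> topspace X. m (v l) s \<in> topspace X - {z}}"
      have oP: "openin X P" unfolding P_def by (rule openin_continuous_map_preimage[OF cm_left[OF cX vX] O])
      have "\<nu> \<in> P" using \<nu>(1) ne mcl vX unfolding P_def by auto
      then obtain n where n: "n \<in> N" "v n \<in> P" "n \<noteq> l" using pick oP by blast
      then have "m (v l) (v n) \<in> topspace X - {z}" using P_def by auto
      then show False using vmul n(3) by simp
    qed
    have ii: "m \<nu> \<nu> = z"
    proof (rule ccontr)
      assume ne: "m \<nu> \<nu> \<noteq> z"
      define P where "P = {s \<in> topspace X. m s \<nu> \<in> topspace X - {z}}"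
      have oP: "openin X P" unfolding P_def by (rule openin_continuous_map_preimage[OF cm_right[OF cX \<nu>(1)] O])
      have "\<nu> \<in> P" using \<nu>(1) ne mcl unfolding P_def by auto
      then obtain n where n: "n \<in> N" "v n \<in> P" using pick oP by blast
      then have "m (v n) \<nu> \<in> topspace X - {z}" using P_def by auto
      then show False using i by simp
    qed
    define P where "P = {s \<in> topspace X. m s s \<in> W}"
    have oP: "openin X P" unfolding P_def by (rule openin_continuous_map_preimage[OF cm_sq[OF cX] W(1)])
    have "\<nu> \<in> P" using \<nu>(1) ii W(2) unfolding P_def by auto
    then obtain n where n: "n \<in> N" "v n \<in> P" using pick oP by blast
    then have "v n \<in> W" using vsq P_def by auto
    then show False using n(1) N_def by auto
  qed
  show ?thesis
  proof (intro allI impI, rule ccontr)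
    fix U assume U: "openin \<tau> U \<and> GZero \<in> U" and inf: "infinite (GT - U)"
    define D where "D = GT - U"
    have Uo: "openin \<tau> U" and U0: "GZero \<in> U" using U by blast+
    obtain V where V: "openin X V" "f ` U = V \<inter> f ` GT" using opn[OF Uo] by blast
    have "z \<in> f ` U" using U0 unfolding z_def by (rule imageI)
    then have zV: "z \<in> V" using V(2) by blast
    have "U \<subseteq> topspace \<tau>" by (rule openin_subset[OF Uo])
    then have UGT: "U \<subseteq> GT" using tsp by simp
    have Dout: "f d \<notin> V" if d: "d \<in> D" for d
    proof
      assume fV: "f d \<in> V"
      have dG: "d \<in> GT" "d \<notin> U" using d unfolding D_def by blast+
      then have "f d \<in> V \<inter> f ` GT" using fV by blast
      then have "f d \<in> f ` U" using V(2) by simp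
      then obtain u where u: "u \<in> U" "f d = f u" by blast
      have "u \<in> GT" using u(1) UGT by blast
      then have "d = u" using inj_onD[OF inj u(2) dG(1)] by blast
      then show False using u(1) dG(2) by blast
    qed
    have Dform: "d = GEl (ii d) (jj d) (kk d) \<and> ii d \<le> kk d \<and> jj d \<le> kk d" if "d \<in> D" for d
      using that U by (cases d) (auto simp: D_def)
    define b where "b d = v (kk d)" for d
    have bconv: "\<forall>W. openin X W \<and> z \<in> W \<longrightarrow> finite {d\<in>D. b d \<notin> W}"
    proof (intro allI impI)
      fix W assume W: "openin X W \<and> z \<in> W"
      have S: "finite {n. v n \<notin> W}" using claimA W by blast
      then obtain K where K: "\<forall>n\<in>{n. v n \<notin> W}. n \<le> K" using finite_nat_set_iff_bounded_le by blast
      have "{d\<in>D. b d \<notin> W} \<subseteq> {d \<in> GT. kk d \<le> K}" using K by (auto simp: b_def D_def)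
      then show "finite {d\<in>D. b d \<notin> W}" using finite_GT_le finite_subset by blast
    qed
    define c where "c d = f (GEl (kk d) (jj d) (kk d))" for d
    define b2 where "b2 d = m (b d) (c d)" for d
    have cA: "c d \<in> f ` (GT - {GZero})" if "d \<in> D" for d
      using Dform[OF that] by (simp add: c_def)
    have b2conv: "\<forall>W. openin X W \<and> z \<in> W \<longrightarrow> finite {d\<in>D. b2 d \<notin> W}"
    proof -
      have "\<forall>W. openin X W \<and> z \<in> W \<longrightarrow> finite {d\<in>D. (\<lambda>x y. m y x) (c d) (b d) \<notin> W}"
      proof (rule coh[OF cm_flip[OF cX] zX])
        show "\<forall>\<alpha>\<in>topspace X. m z \<alpha> = z" using zero_l by blast
        show "\<forall>N. N \<subseteq> D \<and> infinite N \<longrightarrow>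
          (\<exists>\<alpha>\<in>topspace X. \<forall>P. openin X P \<and> \<alpha> \<in> P \<longrightarrow> infinite {n \<in> N. c n \<in> P})"
        proof (intro allI impI)
          fix N assume N: "N \<subseteq> D \<and> infinite N"
          then have "\<forall>n\<in>N. c n \<in> f ` (GT - {GZero})" using cA by blast
          then show "\<exists>\<alpha>\<in>topspace X. \<forall>P. openin X P \<and> \<alpha> \<in> P \<longrightarrow> infinite {n \<in> N. c n \<in> P}"
            using clus[of N c] N by blast
        qed
        show "\<forall>W. openin X W \<and> z \<in> W \<longrightarrow> finite {n \<in> D. b n \<notin> W}" by (rule bconv)
      qed
      then show ?thesis by (simp add: b2_def)
    qed
    define a where "a d = f (GEl (ii d) (kk d) (kk d))" for d
    have aA: "a d \<in> f ` (GT - {GZero})" if "d \<in> D" for d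
      using Dform[OF that] by (simp add: a_def)
    have "\<forall>W. openin X W \<and> z \<in> W \<longrightarrow> finite {d\<in>D. m (a d) (b2 d) \<notin> W}"
    proof (rule coh[OF cX zX zero_r])
      show "\<forall>N. N \<subseteq> D \<and> infinite N \<longrightarrow>
          (\<exists>\<alpha>\<in>topspace X. \<forall>P. openin X P \<and> \<alpha> \<in> P \<longrightarrow> infinite {n \<in> N. a n \<in> P})"
      proof (intro allI impI)
        fix N assume N: "N \<subseteq> D \<and> infinite N"
        then have "\<forall>n\<in>N. a n \<in> f ` (GT - {GZero})" using aA by blast
        then show "\<exists>\<alpha>\<in>topspace X. \<forall>P. openin X P \<and> \<alpha> \<in> P \<longrightarrow> infinite {n \<in> N. a n \<in> P}"
          using clus[of N a] N by blast
      qed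
      show "\<forall>W. openin X W \<and> z \<in> W \<longrightarrow> finite {n \<in> D. b2 n \<notin> W}" by (rule b2conv)
    qed
    then have finV: "finite {d\<in>D. m (a d) (b2 d) \<notin> V}" using V(1) zV by blast
    have eq: "m (a d) (b2 d) = f d" if "d \<in> D" for d
    proof -
      let ?i = "ii d" and ?j = "jj d" and ?k = "kk d"
      have dd: "d = GEl ?i ?j ?k" "?i \<le> ?k" "?j \<le> ?k" using Dform[OF that] by auto
      have "b2 d = f (GEl ?k ?j ?k)"
        using dd by (simp add: b2_def b_def c_def v_def homE)
      then have "m (a d) (b2 d) = f (gt_mult (GEl ?i ?k ?k) (GEl ?k ?j ?k))"
        using dd by (simp add: a_def homE)
      also have "\<dots> = f d" using dd by simp
      finally show ?thesis .
    qed
    have "{d\<in>D. m (a d) (b2 d) \<notin> V} = D" using Dout eq by auto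
    then show False using finV inf D_def by simp
  qed
qed

lemma backward:
  assumes st: "is_semitop_topology \<tau>" and inf: "infinite (UNIV :: 'a set)" and cpt: "compact_space \<tau>"
  shows "\<exists>(X :: 'a topology) m. top_semigroup X m \<and> CLP_compact X \<and> dense_embeds \<tau> X m"
proof -
  from st have tsp: "topspace \<tau> = GT" and Ht: "Hausdorff_space \<tau>"
    and ct: "continuous_map (prod_topology \<tau> \<tau>) \<tau> (\<lambda>(x, y). gt_mult x y)"
    unfolding is_semitop_topology_def by blast+
  obtain e :: "nat \<Rightarrow> 'a" where e: "inj e" using infinite_iff_countable_subset[THEN iffD1, OF inf] by blast
  define h :: "gt \<Rightarrow> 'a" where "h = e \<circ> to_nat"
  have hinj: "inj h" unfolding h_def by (rule inj_compose[OF e inj_to_nat])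
  define g where "g = inv h"
  have gh: "g (h x) = x" for x unfolding g_def by (rule inv_f_f[OF hinj])
  define X where "X = pullback_topology (h ` GT) g \<tau>"
  have topX: "topspace X = h ` GT" unfolding X_def topspace_pullback_topology tsp using gh by auto
  have cg: "continuous_map X \<tau> g"
    using continuous_map_pullback[OF continuous_map_id, of "h ` GT" g] unfolding X_def by simp
  have "continuous_map \<tau> \<tau> (g \<circ> h)"
  proof -
    have "g \<circ> h = id" by (simp add: fun_eq_iff gh)
    then show ?thesis by simp
  qed
  then have ch: "continuous_map \<tau> X h"
    unfolding X_def by (rule continuous_map_pullback') (auto simp: tsp)
  have hm: "homeomorphic_maps \<tau> X h g" unfolding homeomorphic_maps_def
    using ch cg gh topX by auto
  have hmap: "homeomorphic_map \<tau> X h" using hm homeomorphic_maps_map by blast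
  have hs: "\<tau> homeomorphic_space X" using hm homeomorphic_space_def by blast
  define m where "m a b = h (gt_mult (g a) (g b))" for a b
  have HX: "Hausdorff_space X" using hs Ht homeomorphic_Hausdorff_space by blast
  have cX: "compact_space X" using hs cpt homeomorphic_compact_space by blast
  have gX: "g x \<in> GT" if "x \<in> topspace X" for x using that topX gh by auto
  have ts: "top_semigroup X m"
    unfolding top_semigroup_def
  proof (intro conjI ballI)
    show "Hausdorff_space X" by (rule HX)
  next
    fix x y assume "x \<in> topspace X" "y \<in> topspace X"
    then show "m x y \<in> topspace X" using gX gt_mult_GT topX by (simp add: m_def)
  next
    fix x y w assume "x \<in> topspace X" "y \<in> topspace X" "w \<in> topspace X"
    then show "m (m x y) w = m x (m y w)" by (simp add: m_def gh gt_mult_assoc)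
  next
    have c1: "continuous_map (prod_topology X X) (prod_topology \<tau> \<tau>) (\<lambda>(x,y). (g x, g y))"
      by (simp add: continuous_map_prod_top cg)
    have "continuous_map (prod_topology X X) X (h \<circ> (\<lambda>(x,y). gt_mult x y) \<circ> (\<lambda>(x,y). (g x, g y)))"
      by (intro continuous_map_compose[OF c1] continuous_map_compose[OF ct ch])
    moreover have "(h \<circ> (\<lambda>(x,y). gt_mult x y) \<circ> (\<lambda>(x,y). (g x, g y))) = (\<lambda>(x,y). m x y)"
      by (simp add: fun_eq_iff m_def)
    ultimately show "continuous_map (prod_topology X X) X (\<lambda>(x,y). m x y)" by simp
  qed
  have clp: "CLP_compact X" unfolding CLP_compact_def
  proof (intro allI impI)
    fix \<U> assume a: "(\<forall>U\<in>\<U>. closedin X U \<and> openin X U) \<and> topspace X \<subseteq> \<Union>\<U>"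
    then have "(\<forall>U\<in>\<U>. openin X U) \<and> topspace X \<subseteq> \<Union>\<U>" by blast
    then show "\<exists>\<F>. finite \<F> \<and> \<F> \<subseteq> \<U> \<and> topspace X \<subseteq> \<Union>\<F>"
      using cX[unfolded compact_space_alt, rule_format, of \<U>] by blast
  qed
  have de: "dense_embeds \<tau> X m" unfolding dense_embeds_def
  proof (rule exI[of _ h], intro conjI ballI)
    show "embedding_map \<tau> X h" using hmap surjective_embedding_map by blast
    fix x y assume "x \<in> GT" "y \<in> GT"
    show "h (gt_mult x y) = m (h x) (h y)" by (simp add: m_def gh)
  next
    show "X closure_of h ` GT = topspace X" by (metis closure_of_topspace topX)
  qed
  show ?thesis using ts clp de by blast
qed

theorem lemma4p7:
  fixes \<tau> :: "gt topology"
  assumes "is_semitop_topology \<tau>"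
    and "infinite (UNIV :: 'a set)"
  shows "((\<exists>(X :: 'a topology) m. top_semigroup X m \<and> CLP_compact X \<and> dense_embeds \<tau> X m)
            \<longleftrightarrow> compact_space \<tau>)
         \<and> (compact_space \<tau> \<longleftrightarrow> \<tau> = tau_c)"
proof
  show "(\<exists>(X :: 'a topology) m. top_semigroup X m \<and> CLP_compact X \<and> dense_embeds \<tau> X m)
            \<longleftrightarrow> compact_space \<tau>"
  proof
    assume "\<exists>(X :: 'a topology) m. top_semigroup X m \<and> CLP_compact X \<and> dense_embeds \<tau> X m"
    then obtain X :: "'a topology" and m where "top_semigroup X m" "CLP_compact X" "dense_embeds \<tau> X m"
      by blast
    then have "\<forall>U. openin \<tau> U \<and> GZero \<in> U \<longrightarrow> finite (GT - U)"
      using forward[OF assms(1)] by blast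
    then show "compact_space \<tau>" using compact_iff_cofinite[OF assms(1)] by blast
  next
    assume "compact_space \<tau>"
    then show "\<exists>(X :: 'a topology) m. top_semigroup X m \<and> CLP_compact X \<and> dense_embeds \<tau> X m"
      using backward[OF assms(1) assms(2)] by blast
  qed
next
  show "compact_space \<tau> \<longleftrightarrow> \<tau> = tau_c" by (rule part2[OF assms(1)])
qed

end
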